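(* Let $n>1$, $m\ge1$, let $v\in Z_{n,m}$, let $P$ be a pivot path of $v$ (to $0$), and let $I$ be a $P$-interval. Then for all $i,j$ with $[i,i+1]\subseteq I$ and $[j,j+1]\subseteq I$, all steps of $P$ that are shifts at $i$ and all steps of $P$ that are shifts at $j$ are in the same direction.
   Context: Elements of $\mathbb{Z}_n$ are identified with representatives in $\{0,\dots,n-1\}$. $Z_{n,m}$ has vertices $u=(u_0,\dots,u_{m+1})\in\mathbb{Z}_n\times\{-1,0,1\}^m\times\mathbb{Z}_n$ with $\sum u_i\equiv0\pmod n$. A step from $v$ to $u$ is a left shift at $i$ ($0\le i\le m$) if $u_j=v_j$ for $j\notin\{i,i+1\}$, $u_i=v_i+1$, $u_{i+1}=v_{i+1}-1$, and a right shift at $i$ if $u_i=v_i-1$, $u_{i+1}=v_{i+1}+1$ (arithmetic in coordinates $0,m+1$ in $\mathbb{Z}_n$); vertices are adjacent iff related by such a shift. For a path $P$ from $v$ to the all-zero vertex $0$: $0\le p\le m$ is an inner wall of $P$ if no step of $P$ is a shift at $p$; $-1$ is a wall if no step is a left shift at $0$; $m+1$ is a wall if no step is a right shift at $m$. A $p$-pivot path of $v$ is a shortest path from $v$ to $0$ among those having $p$ as a wall; a pivot path is a $p$-pivot path for some $p$. If $p_1<\dots<p_t$ are the inner walls of a pivot path $P$ and $p_0=-1$, $p_{t+1}=m+1$, the $P$-intervals are the integer intervals $[p_k+1,p_{k+1}]$, $0\le k\le t$. *)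

theory Defs
  imports Main
begin

(* Vertices of Z_{n,m}: integer lists u = [u_0,...,u_{m+1}] of length m+2 with
   u_0, u_{m+1} representatives in {0..n-1} of Z_n, middle entries in {-1,0,1},
   and sum congruent to 0 mod n. *)
definition is_vertex :: "nat \<Rightarrow> nat \<Rightarrow> int list \<Rightarrow> bool" where
  "is_vertex n m u \<longleftrightarrow> length u = m + 2 \<and> u ! 0 \<in> {0..<int n} \<and> u ! (m+1) \<in> {0..<int n}
     \<and> (\<forall>j\<in>{1..m}. u ! j \<in> {-1, 0, 1}) \<and> sum_list u mod int n = 0"

definition zero_vertex :: "nat \<Rightarrow> int list" where
  "zero_vertex m = replicate (m + 2) 0"

datatype dir = Left | Right

definition dir_val :: "dir \<Rightarrow> int" where
  "dir_val d = (case d of Left \<Rightarrow> 1 | Right \<Rightarrow> -1)"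

definition addc :: "nat \<Rightarrow> nat \<Rightarrow> nat \<Rightarrow> int \<Rightarrow> int \<Rightarrow> int" where
  "addc n m j x c = (if j = 0 \<or> j = m + 1 then (x + c) mod int n else x + c)"

definition shift :: "nat \<Rightarrow> nat \<Rightarrow> dir \<Rightarrow> nat \<Rightarrow> int list \<Rightarrow> int list \<Rightarrow> bool" where
  "shift n m d i v u \<longleftrightarrow> i \<le> m \<and> length v = m + 2 \<and> length u = m + 2
     \<and> (\<forall>j < m + 2. j \<noteq> i \<and> j \<noteq> i + 1 \<longrightarrow> u ! j = v ! j)
     \<and> u ! i = addc n m i (v ! i) (dir_val d)
     \<and> u ! (i+1) = addc n m (i+1) (v ! (i+1)) (- dir_val d)"

definition adjacent :: "nat \<Rightarrow> nat \<Rightarrow> int list \<Rightarrow> int list \<Rightarrow> bool" where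
  "adjacent n m v u \<longleftrightarrow> is_vertex n m v \<and> is_vertex n m u \<and> (\<exists>d i. shift n m d i v u)"

definition is_path :: "nat \<Rightarrow> nat \<Rightarrow> int list list \<Rightarrow> int list \<Rightarrow> bool" where
  "is_path n m P v \<longleftrightarrow> P \<noteq> [] \<and> hd P = v \<and> last P = zero_vertex m \<and> distinct P
     \<and> (\<forall>x\<in>set P. is_vertex n m x)
     \<and> (\<forall>k. Suc k < length P \<longrightarrow> adjacent n m (P ! k) (P ! Suc k))"

definition path_len :: "int list list \<Rightarrow> nat" where
  "path_len P = length P - 1"

definition has_step :: "nat \<Rightarrow> nat \<Rightarrow> int list list \<Rightarrow> dir \<Rightarrow> nat \<Rightarrow> bool" where
  "has_step n m P d i \<longleftrightarrow> (\<exists>k. Suc k < length P \<and> shift n m d i (P ! k) (P ! Suc k))"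

definition inner_walls :: "nat \<Rightarrow> nat \<Rightarrow> int list list \<Rightarrow> int set" where
  "inner_walls n m P = {p. 0 \<le> p \<and> p \<le> int m \<and> \<not> (\<exists>d. has_step n m P d (nat p))}"

definition is_wall :: "nat \<Rightarrow> nat \<Rightarrow> int list list \<Rightarrow> int \<Rightarrow> bool" where
  "is_wall n m P p \<longleftrightarrow> p \<in> inner_walls n m P
     \<or> (p = -1 \<and> \<not> has_step n m P Left 0)
     \<or> (p = int m + 1 \<and> \<not> has_step n m P Right m)"

definition p_pivot_path :: "nat \<Rightarrow> nat \<Rightarrow> int \<Rightarrow> int list \<Rightarrow> int list list \<Rightarrow> bool" where
  "p_pivot_path n m p v P \<longleftrightarrow> is_path n m P v \<and> is_wall n m P p
     \<and> (\<forall>Q. is_path n m Q v \<and> is_wall n m Q p \<longrightarrow> path_len P \<le> path_len Q)"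

definition pivot_path :: "nat \<Rightarrow> nat \<Rightarrow> int list \<Rightarrow> int list list \<Rightarrow> bool" where
  "pivot_path n m v P \<longleftrightarrow> (\<exists>p. p_pivot_path n m p v P)"

definition P_interval :: "nat \<Rightarrow> nat \<Rightarrow> int list list \<Rightarrow> int set \<Rightarrow> bool" where
  "P_interval n m P I \<longleftrightarrow> (let W = {-1, int m + 1} \<union> inner_walls n m P in
     \<exists>a b. a \<in> W \<and> b \<in> W \<and> a < b \<and> (\<forall>c\<in>W. \<not> (a < c \<and> c < b)) \<and> I = {a + 1..b})"

end

theory Submission imports Defs begin

lemma sum_list_upd_int: "k < length xs \<Longrightarrow> sum_list (xs[k := (x::int)]) = sum_list xs + x - xs ! k"
  by (induction xs arbitrary: k) (auto split: nat.split)

lemma mod_ne_self: "n > 1 \<Longrightarrow> c \<in> {1, -1} \<Longrightarrow> (x + c) mod int n \<noteq> (x::int)"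
proof
  assume n: "n > 1" and c: "c \<in> {1, -1}" and e: "(x + c) mod int n = x"
  then have "x mod int n = x" by (metis mod_mod_trivial)
  with e have "(x + c) mod int n = x mod int n" by simp
  then have "int n dvd (x + c - x)" by (simp only: mod_eq_dvd_iff)
  then have "int n dvd c" by simp
  with c n show False by auto
qed

lemma dir_val_cases: "dir_val d \<in> {1, -1}" by (cases d) (auto simp: dir_val_def)

lemma addc_ne: "n > 1 \<Longrightarrow> c \<in> {1,-1} \<Longrightarrow> addc n m j x c \<noteq> x"
  using mod_ne_self[of n c x] by (auto simp: addc_def)

lemma shift_changes:
  assumes "n > 1" "shift n m d i x y"
  shows "y ! i \<noteq> x ! i" "y ! (i+1) \<noteq> x ! (i+1)"
  using assms addc_ne[of n "dir_val d" m i "x!i"] addc_ne[of n "- dir_val d" m "i+1" "x!(i+1)"]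
    dir_val_cases[of d] by (auto simp: shift_def)

lemma shift_unique:
  assumes "n > 1" "m \<ge> 1" "shift n m d i x y" "shift n m d' i' x y"
  shows "d = d' \<and> i = i'"
proof -
  have ii: "i = i'"
  proof (rule ccontr)
    assume "i \<noteq> i'"
    then consider "i < i'" | "i' < i" by linarith
    then show False
    proof cases
      case 1
      then have "y ! i = x ! i" using assms(4) assms(3) unfolding shift_def by auto
      then show False using shift_changes(1)[OF assms(1,3)] by simp
    next
      case 2
      then have "y ! i' = x ! i'" using assms(4) assms(3) unfolding shift_def by auto
      then show False using shift_changes(1)[OF assms(1,4)] by simp
    qed
  qed
  moreover have "d = d'"
  proof (rule ccontr)
    assume dd: "d \<noteq> d'"
    then have dv: "dir_val d' = - dir_val d" "dir_val d \<in> {1,-1}"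
      by (cases d; cases d'; simp add: dir_val_def)+
    show False
    proof (cases "i = 0")
      case True
      have "y!(i+1) = x!(i+1) - dir_val d" "y!(i+1) = x!(i+1) + dir_val d"
        using assms(3,4) ii True assms(2) dv unfolding shift_def addc_def by auto
      then show False using dv by auto
    next
      case False
      have "i \<le> m" using assms(3) by (simp add: shift_def)
      then have "y!i = x!i + dir_val d" "y!i = x!i - dir_val d"
        using assms(3,4) ii False dv unfolding shift_def addc_def by auto
      then show False using dv by auto
    qed
  qed
  ultimately show ?thesis by simp
qed

definition drel :: "nat \<Rightarrow> nat \<Rightarrow> int list \<Rightarrow> (nat \<Rightarrow> int) \<Rightarrow> bool" where
  "drel n m x D \<longleftrightarrow> (\<forall>j. 1 \<le> j \<and> j \<le> m \<longrightarrow> x!j = D (j-1) - D j) \<and> (x!0 + D 0) mod int n = 0"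

lemma drel_step:
  assumes sh: "shift n m d i x y"
  shows "drel n m y (D(i := D i - dir_val d)) \<longleftrightarrow> drel n m x D"
proof -
  define c where "c = dir_val d"
  define D' where "D' = D(i := D i - c)"
  have im: "i \<le> m" and ly: "length y = m+2" and lx: "length x = m+2"
    and oth: "\<And>j. j < m+2 \<Longrightarrow> j \<noteq> i \<Longrightarrow> j \<noteq> i+1 \<Longrightarrow> y!j = x!j"
    and yi: "y!i = addc n m i (x!i) c" and yi1: "y!(i+1) = addc n m (i+1) (x!(i+1)) (-c)"
    using sh by (auto simp: shift_def c_def)
  have mid: "(y!j = D' (j-1) - D' j) \<longleftrightarrow> (x!j = D (j-1) - D j)" if "1 \<le> j" "j \<le> m" for j
  proof -
    consider "j = i" | "j = i+1" | "j \<noteq> i" "j \<noteq> i+1" by blast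
    then show ?thesis
    proof cases
      case 1
      then have "y!j = x!j + c" using yi that by (simp add: addc_def)
      moreover have "j - 1 \<noteq> j" using that by simp
      then have "D' (j-1) - D' j = D (j-1) - D j + c" using 1 by (simp add: D'_def)
      ultimately show ?thesis by auto
    next
      case 2
      then have "y!j = x!j - c" using yi1 that by (simp add: addc_def)
      moreover have "D' (j-1) - D' j = D (j-1) - D j - c" using 2 that by (simp add: D'_def)
      ultimately show ?thesis by auto
    next
      case 3
      then have "y!j = x!j" using oth that by simp
      moreover have "j - 1 \<noteq> i" using 3 that by arith
      then have "D' (j-1) - D' j = D (j-1) - D j" using 3 by (simp add: D'_def)
      ultimately show ?thesis by auto
    qed
  qed
  have zero: "(y!0 + D' 0) mod int n = 0 \<longleftrightarrow> (x!0 + D 0) mod int n = 0"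
  proof (cases "i = 0")
    case True
    then have "y!0 = (x!0 + c) mod int n" using yi by (simp add: addc_def)
    moreover have "D' 0 = D 0 - c" using True by (simp add: D'_def)
    ultimately have "(y!0 + D' 0) mod int n = ((x!0 + c) mod int n + (D 0 - c)) mod int n" by simp
    also have "\<dots> = ((x!0 + c) + (D 0 - c)) mod int n" by (rule mod_add_left_eq)
    also have "\<dots> = (x!0 + D 0) mod int n" by simp
    finally have "(y!0 + D' 0) mod int n = (x!0 + D 0) mod int n" .
    then show ?thesis by simp
  next
    case False
    then show ?thesis using oth[of 0] by (simp add: D'_def)
  qed
  have A: "(\<forall>j. 1 \<le> j \<and> j \<le> m \<longrightarrow> y!j = D' (j-1) - D' j) \<longleftrightarrow>
      (\<forall>j. 1 \<le> j \<and> j \<le> m \<longrightarrow> x!j = D (j-1) - D j)" using mid by auto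
  show ?thesis unfolding drel_def c_def[symmetric] D'_def[symmetric] by (simp only: A zero)
qed

lemma has_step_Cons:
  "has_step n m (x # y # r) d i \<longleftrightarrow> shift n m d i x y \<or> has_step n m (y # r) d i"
proof
  assume "has_step n m (x # y # r) d i"
  then obtain k where k: "Suc k < length (x#y#r)" "shift n m d i ((x#y#r) ! k) ((x#y#r) ! Suc k)"
    unfolding has_step_def by blast
  show "shift n m d i x y \<or> has_step n m (y # r) d i"
  proof (cases k)
    case 0 then show ?thesis using k by simp
  next
    case (Suc k') then show ?thesis using k unfolding has_step_def by auto
  qed
next
  assume "shift n m d i x y \<or> has_step n m (y # r) d i"
  then show "has_step n m (x # y # r) d i"
  proof
    assume "shift n m d i x y" then show ?thesis unfolding has_step_def by (rule_tac x=0 in exI) simp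
  next
    assume "has_step n m (y # r) d i"
    then obtain k where "Suc k < length (y#r)" "shift n m d i ((y#r) ! k) ((y#r) ! Suc k)"
      unfolding has_step_def by blast
    then show ?thesis unfolding has_step_def by (rule_tac x="Suc k" in exI) simp
  qed
qed

lemma has_step_single: "\<not> has_step n m [x] d i" by (simp add: has_step_def)

lemma walk_counts:
  assumes "n > 1" "m \<ge> 1"
  shows "Q \<noteq> [] \<Longrightarrow> last Q = zero_vertex m \<Longrightarrow>
    (\<forall>k. Suc k < length Q \<longrightarrow> adjacent n m (Q!k) (Q!Suc k)) \<Longrightarrow>
    \<exists>Lc Rc :: nat \<Rightarrow> nat. drel n m (hd Q) (\<lambda>i. int (Lc i) - int (Rc i))
      \<and> (\<Sum>i\<le>m. Lc i + Rc i) = length Q - 1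
      \<and> (\<forall>i. Lc i > 0 \<longleftrightarrow> has_step n m Q Left i)
      \<and> (\<forall>i. Rc i > 0 \<longleftrightarrow> has_step n m Q Right i)"
proof (induction Q)
  case Nil then show ?case by simp
next
  case (Cons x Q')
  show ?case
  proof (cases "Q' = []")
    case True
    then have "x = zero_vertex m" using Cons.prems by simp
    then have "\<forall>j < m+2. x!j = 0" unfolding zero_vertex_def by (metis nth_replicate)
    then have "drel n m x (\<lambda>i. 0)" unfolding drel_def by simp
    then show ?thesis using True by (rule_tac x="\<lambda>i. 0" in exI, rule_tac x="\<lambda>i. 0" in exI)
        (simp add: has_step_single)
  next
    case False
    then obtain y r where Q': "Q' = y # r" by (cases Q') auto
    have adj: "\<forall>k. Suc k < length Q' \<longrightarrow> adjacent n m (Q'!k) (Q'!Suc k)"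
      using Cons.prems(3) by auto
    from Cons.IH[OF False _ adj] Cons.prems(2) False obtain Lc Rc where
      IH: "drel n m y (\<lambda>i. int (Lc i) - int (Rc i))" "(\<Sum>i\<le>m. Lc i + Rc i) = length Q' - 1"
          "\<forall>i. Lc i > 0 \<longleftrightarrow> has_step n m Q' Left i" "\<forall>i. Rc i > 0 \<longleftrightarrow> has_step n m Q' Right i"
      using Q' by auto
    have "adjacent n m x y" using Cons.prems(3)[rule_format, of 0] Q' by simp
    then obtain d i0 where sh: "shift n m d i0 x y" unfolding adjacent_def by blast
    have i0m: "i0 \<le> m" using sh by (simp add: shift_def)
    define Lc' where "Lc' = (\<lambda>i. Lc i + (if i = i0 \<and> d = Left then 1 else 0::nat))"
    define Rc' where "Rc' = (\<lambda>i. Rc i + (if i = i0 \<and> d = Right then 1 else 0::nat))"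
    define E where "E = (\<lambda>i. int (Lc' i) - int (Rc' i))"
    have eqD: "E(i0 := E i0 - dir_val d) = (\<lambda>i. int (Lc i) - int (Rc i))"
      by (rule ext) (cases d; auto simp: E_def Lc'_def Rc'_def dir_val_def)
    have "drel n m x (\<lambda>i. int (Lc' i) - int (Rc' i))"
      using drel_step[OF sh, of E] IH(1) unfolding eqD by (simp add: E_def)
    moreover have "(\<Sum>i\<le>m. Lc' i + Rc' i) = length (x # Q') - 1"
    proof -
      have "(\<Sum>i\<le>m. Lc' i + Rc' i) = (\<Sum>i\<le>m. Lc i + Rc i) + (\<Sum>i\<le>m. if i = i0 then 1 else 0)"
        unfolding Lc'_def Rc'_def sum.distrib[symmetric] by (rule sum.cong[OF refl]) (cases d; auto)
      also have "\<dots> = (\<Sum>i\<le>m. Lc i + Rc i) + 1" using i0m by simp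
      finally show ?thesis using IH(2) Q' by simp
    qed
    moreover have "\<forall>i. Lc' i > 0 \<longleftrightarrow> has_step n m (x # Q') Left i"
    proof
      fix i
      have "shift n m Left i x y \<longleftrightarrow> (i = i0 \<and> d = Left)"
        using shift_unique[OF assms sh, of Left i] sh by auto
      then show "Lc' i > 0 \<longleftrightarrow> has_step n m (x # Q') Left i"
        using IH(3) unfolding Q' has_step_Cons Lc'_def by auto
    qed
    moreover have "\<forall>i. Rc' i > 0 \<longleftrightarrow> has_step n m (x # Q') Right i"
    proof
      fix i
      have "shift n m Right i x y \<longleftrightarrow> (i = i0 \<and> d = Right)"
        using shift_unique[OF assms sh, of Right i] sh by auto
      then show "Rc' i > 0 \<longleftrightarrow> has_step n m (x # Q') Right i"
        using IH(4) unfolding Q' has_step_Cons Rc'_def by auto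
    qed
    ultimately show ?thesis by auto
  qed
qed


lemma addc_mod: "addc n m j v c mod int n = (v + c) mod int n"
  by (simp add: addc_def)

lemma addc_mid: "j \<noteq> 0 \<Longrightarrow> j \<noteq> m + 1 \<Longrightarrow> addc n m j v c = v + c"
  by (simp add: addc_def)

lemma mod_combine:
  assumes "a' mod (k::int) = (a + c) mod k" "b' mod k = (b - c) mod k"
  shows "(S - a - b + a' + b') mod k = S mod k"
proof -
  have "k dvd a' - (a + c)" "k dvd b' - (b - c)" using assms by (simp_all add: mod_eq_dvd_iff)
  then have "k dvd (a' - (a + c)) + (b' - (b - c))" by (rule dvd_add)
  then have "k dvd (S - a - b + a' + b') - S" by (simp add: algebra_simps)
  then show ?thesis by (simp add: mod_eq_dvd_iff)
qed

lemma one_step: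
  assumes n: "n > 1" and vx: "is_vertex n m x" and im: "i \<le> m" and c: "c = dir_val d"
    and c1: "1 \<le> i \<Longrightarrow> x!i + c \<in> {-1,0,1}" and c2: "i+1 \<le> m \<Longrightarrow> x!(i+1) - c \<in> {-1,0,1}"
  defines "y \<equiv> x[i := addc n m i (x!i) c, i+1 := addc n m (i+1) (x!(i+1)) (-c)]"
  shows "shift n m d i x y \<and> is_vertex n m y"
proof -
  have lx: "length x = m+2" using vx by (simp add: is_vertex_def)
  have ly: "length y = m+2" using lx by (simp add: y_def)
  have yi: "y!i = addc n m i (x!i) c" using lx im by (simp add: y_def nth_list_update)
  have yi1: "y!(i+1) = addc n m (i+1) (x!(i+1)) (-c)" using lx im by (simp add: y_def)
  have oth: "\<And>j. j \<noteq> i \<Longrightarrow> j \<noteq> i+1 \<Longrightarrow> y!j = x!j" by (simp add: y_def)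
  have sh: "shift n m d i x y" unfolding shift_def using im lx ly yi yi1 oth c by auto
  have np: "int n > 0" using n by simp
  have r0: "y!0 \<in> {0..<int n}"
  proof (cases "i = 0")
    case True then show ?thesis using yi np by (simp add: addc_def)
  next
    case False then show ?thesis using oth[of 0] vx by (simp add: is_vertex_def)
  qed
  have rm: "y!(m+1) \<in> {0..<int n}"
  proof (cases "i = m")
    case True then show ?thesis using yi1 np by (simp add: addc_def)
  next
    case False then show ?thesis using oth[of "m+1"] vx im by (simp add: is_vertex_def)
  qed
  have mid: "y!j \<in> {-1,0,1}" if "j \<in> {1..m}" for j
  proof -
    consider "j = i" | "j = i+1" | "j \<noteq> i" "j \<noteq> i+1" by blast
    then show ?thesis
    proof cases
      case 1 then show ?thesis using yi c1 that addc_mid[of i m n "x!i" c] by auto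
    next
      case 2 then show ?thesis using yi1 c2 that addc_mid[of "i+1" m n "x!(i+1)" "-c"] by auto
    next
      case 3 then show ?thesis using oth vx that by (simp add: is_vertex_def)
    qed
  qed
  have "sum_list y = sum_list x - x!i - x!(i+1) + y!i + y!(i+1)"
    using lx im yi yi1 unfolding y_def by (simp add: sum_list_upd_int nth_list_update)
  then have "sum_list y mod int n = sum_list x mod int n"
    using mod_combine[of "y!i" "int n" "x!i" c "y!(i+1)" "x!(i+1)" "sum_list x"] yi yi1
    by (simp add: addc_mod)
  then have "sum_list y mod int n = 0" using vx by (simp add: is_vertex_def)
  then have "is_vertex n m y" using ly r0 rm mid unfolding is_vertex_def by blast
  with sh show ?thesis by blast
qed

lemma sum_abs_upd:
  fixes i m :: nat
  assumes "i \<le> m" "D i * c > 0" "c \<in> {1, -1::int}"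
  shows "(\<Sum>k\<le>m. \<bar>(D(i := D i - c)) k\<bar>) = (\<Sum>k\<le>m. \<bar>D k\<bar>) - 1"
proof -
  have "(\<Sum>k\<le>m. \<bar>(D(i := D i - c)) k\<bar>) = \<bar>D i - c\<bar> + (\<Sum>k\<in>{..m} - {i}. \<bar>(D(i := D i - c)) k\<bar>)"
    using assms(1) by (subst sum.remove[of _ i]) auto
  also have "(\<Sum>k\<in>{..m} - {i}. \<bar>(D(i := D i - c)) k\<bar>) = (\<Sum>k\<in>{..m} - {i}. \<bar>D k\<bar>)"
    by (rule sum.cong) auto
  also have "\<bar>D i - c\<bar> = \<bar>D i\<bar> - 1" using assms(2,3) by (auto simp: zero_less_mult_iff)
  also have "\<bar>D i\<bar> - 1 + (\<Sum>k\<in>{..m} - {i}. \<bar>D k\<bar>) = (\<Sum>k\<le>m. \<bar>D k\<bar>) - 1"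
    using sum.remove[of "{..m}" i "\<lambda>k. \<bar>D k\<bar>"] assms(1) by simp
  finally show ?thesis .
qed

lemma zero_of_drel:
  assumes "is_vertex n m x" "drel n m x D" "\<forall>i\<le>m. D i = 0"
  shows "x = zero_vertex m"
proof (rule nth_equalityI)
  have lx: "length x = m+2" using assms by (simp add: is_vertex_def)
  then show "length x = length (zero_vertex m)" by (simp add: zero_vertex_def)
  have midz: "x!j = 0" if "1 \<le> j" "j \<le> m" for j
    using assms(2,3) that unfolding drel_def by auto
  have x0: "x!0 = 0"
  proof -
    have "x!0 mod int n = 0" using assms(2,3) unfolding drel_def by auto
    moreover have "x!0 \<in> {0..<int n}" using assms(1) by (simp add: is_vertex_def)
    ultimately show ?thesis by simp
  qed
  have "sum_list x = (\<Sum>j = 0..<m+2. x!j)" using lx by (simp add: sum_list_sum_nth)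
  also have "\<dots> = (\<Sum>j = 0..<m+1. x!j) + x!(m+1)" by simp
  also have "(\<Sum>j = 0..<m+1. x!j) = 0"
  proof (rule sum.neutral, intro ballI)
    fix j assume "j \<in> {0..<m+1}"
    then show "x!j = 0" using x0 midz[of j] by (cases "j = 0") auto
  qed
  finally have "sum_list x = x!(m+1)" by simp
  then have "x!(m+1) mod int n = 0" using assms(1) by (simp add: is_vertex_def)
  moreover have "x!(m+1) \<in> {0..<int n}" using assms(1) by (simp add: is_vertex_def)
  ultimately have xm: "x!(m+1) = 0" by simp
  show "x!j = zero_vertex m ! j" if "j < length x" for j
  proof -
    have "zero_vertex m ! j = 0" using that lx unfolding zero_vertex_def by (metis nth_replicate)
    moreover have "x!j = 0"
      using that lx x0 xm midz[of j] by (cases "j = 0"; cases "j = m+1"; auto)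
    ultimately show ?thesis by simp
  qed
qed


lemma realize:
  assumes n: "n > 1"
  shows "is_vertex n m x \<Longrightarrow> drel n m x D \<Longrightarrow> (\<Sum>i\<le>m. \<bar>D i\<bar>) = int N \<Longrightarrow>
    \<exists>W. W \<noteq> [] \<and> hd W = x \<and> last W = zero_vertex m \<and> length W = Suc N
      \<and> (\<forall>y\<in>set W. is_vertex n m y)
      \<and> (\<forall>k. Suc k < length W \<longrightarrow> (\<exists>d i. shift n m d i (W!k) (W!Suc k)
             \<and> (d = Left \<longrightarrow> D i > 0) \<and> (d = Right \<longrightarrow> D i < 0)))"
proof (induction N arbitrary: x D)
  case 0
  then have "\<forall>i\<le>m. D i = 0" by (simp add: sum_nonneg_eq_0_iff)
  then have "x = zero_vertex m" using zero_of_drel 0 by blast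
  then show ?case using 0 by (rule_tac x="[x]" in exI) simp
next
  case (Suc N)
  have lx: "length x = m+2" using Suc.prems by (simp add: is_vertex_def)
  have mid: "\<And>j. 1 \<le> j \<Longrightarrow> j \<le> m \<Longrightarrow> x!j = D (j-1) - D j"
    using Suc.prems(2) by (simp add: drel_def)
  have midr: "\<And>j. 1 \<le> j \<Longrightarrow> j \<le> m \<Longrightarrow> x!j \<in> {-1,0,1}"
    using Suc.prems(1) by (simp add: is_vertex_def)
  have ext: "?case" if im: "i \<le> m" and pos: "D i * dir_val d > 0"
     and c1: "1 \<le> i \<Longrightarrow> x!i + dir_val d \<in> {-1,0,1}"
     and c2: "i+1 \<le> m \<Longrightarrow> x!(i+1) - dir_val d \<in> {-1,0,1}" for i d
  proof -
    define c where "c = dir_val d"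
    define y where "y = x[i := addc n m i (x!i) c, i+1 := addc n m (i+1) (x!(i+1)) (-c)]"
    have cc: "c \<in> {1,-1}" using dir_val_cases c_def by simp
    have sy: "shift n m d i x y \<and> is_vertex n m y"
      using one_step[OF n Suc.prems(1) im c_def] c1 c2 unfolding y_def c_def by blast
    define D' where "D' = D(i := D i - c)"
    have dy: "drel n m y D'" using drel_step[of n m d i x y D] sy Suc.prems(2) by (simp add: D'_def c_def)
    have sD: "(\<Sum>k\<le>m. \<bar>D' k\<bar>) = int N"
      using sum_abs_upd[OF im, of D c] pos cc Suc.prems(3) by (simp add: D'_def c_def)
    obtain W where W: "W \<noteq> []" "hd W = y" "last W = zero_vertex m" "length W = Suc N"
      "\<forall>y\<in>set W. is_vertex n m y"
      "\<forall>k. Suc k < length W \<longrightarrow> (\<exists>d i. shift n m d i (W!k) (W!Suc k)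
             \<and> (d = Left \<longrightarrow> D' i > 0) \<and> (d = Right \<longrightarrow> D' i < 0))"
      using Suc.IH[OF conjunct2[OF sy] dy sD] by blast
    have trans: "(d' = Left \<longrightarrow> D i' > 0) \<and> (d' = Right \<longrightarrow> D i' < 0)"
      if "(d' = Left \<longrightarrow> D' i' > 0) \<and> (d' = Right \<longrightarrow> D' i' < 0)" for d' i'
    proof (cases "i' = i")
      case True
      then show ?thesis using that pos cc unfolding D'_def c_def[symmetric]
        by (cases d') (auto simp: zero_less_mult_iff)
    next
      case False then show ?thesis using that by (simp add: D'_def)
    qed
    have hdW: "W ! 0 = y" using W(1,2) by (simp add: hd_conv_nth)
    show ?thesis
    proof (rule exI[of _ "x # W"], intro conjI)
      show "\<forall>y\<in>set (x # W). is_vertex n m y" using W(5) Suc.prems(1) by simp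
      show "\<forall>k. Suc k < length (x # W) \<longrightarrow> (\<exists>d i. shift n m d i ((x # W)!k) ((x # W)!Suc k)
             \<and> (d = Left \<longrightarrow> D i > 0) \<and> (d = Right \<longrightarrow> D i < 0))"
      proof (intro allI impI)
        fix k assume k: "Suc k < length (x # W)"
        show "\<exists>d i. shift n m d i ((x # W)!k) ((x # W)!Suc k)
             \<and> (d = Left \<longrightarrow> D i > 0) \<and> (d = Right \<longrightarrow> D i < 0)"
        proof (cases k)
          case 0
          have "(d = Left \<longrightarrow> D i > 0) \<and> (d = Right \<longrightarrow> D i < 0)"
            using pos by (cases d) (auto simp: dir_val_def)
          then show ?thesis using 0 sy hdW by auto
        next
          case (Suc k')
          then have "Suc k' < length W" using k by simp
          then obtain d' i' where "shift n m d' i' (W!k') (W!Suc k')"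
            "(d' = Left \<longrightarrow> D' i' > 0) \<and> (d' = Right \<longrightarrow> D' i' < 0)" using W(6) by blast
          then show ?thesis using Suc trans by auto
        qed
      qed
    qed (use W in auto)
  qed
  have "\<exists>k\<le>m. D k \<noteq> 0"
  proof (rule ccontr)
    assume "\<not> ?thesis"
    then have "(\<Sum>i\<le>m. \<bar>D i\<bar>) = 0" by simp
    with Suc.prems(3) show False by simp
  qed
  have fin: "finite (D ` {..m})" "D ` {..m} \<noteq> {}" by auto
  show ?case
  proof (cases "\<exists>k\<le>m. D k > 0")
    case True
    obtain i where im: "i \<le> m" and imax: "D i = Max (D ` {..m})"
    proof -
      have "Max (D ` {..m}) \<in> D ` {..m}" using Max_in[OF fin] .
      then show ?thesis using that by (metis imageE atMost_iff)
    qed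
    have ge: "\<And>k. k \<le> m \<Longrightarrow> D k \<le> D i" using imax fin by simp
    have Dpos: "D i > 0" using True ge by force
    show ?thesis
    proof (rule ext[OF im, of Left])
      show "D i * dir_val Left > 0" using Dpos by (simp add: dir_val_def)
      show "x!i + dir_val Left \<in> {-1,0,1}" if "1 \<le> i"
        using mid[of i] midr[of i] ge[OF order.trans[OF diff_le_self im, of 1]] that im by (auto simp: dir_val_def)
      show "x!(i+1) - dir_val Left \<in> {-1,0,1}" if "i + 1 \<le> m"
        using mid[of "i+1"] midr[of "i+1"] ge[of "i+1"] that by (auto simp: dir_val_def)
    qed
  next
    case False
    then have neg: "\<exists>k\<le>m. D k < 0" using \<open>\<exists>k\<le>m. D k \<noteq> 0\<close> by force
    obtain i where im: "i \<le> m" and imin: "D i = Min (D ` {..m})"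
    proof -
      have "Min (D ` {..m}) \<in> D ` {..m}" using Min_in[OF fin] .
      then show ?thesis using that by (metis imageE atMost_iff)
    qed
    have le: "\<And>k. k \<le> m \<Longrightarrow> D i \<le> D k" using imin fin by simp
    have Dneg: "D i < 0" using neg le by force
    show ?thesis
    proof (rule ext[OF im, of Right])
      show "D i * dir_val Right > 0" using Dneg by (simp add: dir_val_def mult_neg_neg)
      show "x!i + dir_val Right \<in> {-1,0,1}" if "1 \<le> i"
        using mid[of i] midr[of i] le[OF order.trans[OF diff_le_self im, of 1]] that im by (auto simp: dir_val_def)
      show "x!(i+1) - dir_val Right \<in> {-1,0,1}" if "i + 1 \<le> m"
        using mid[of "i+1"] midr[of "i+1"] le[of "i+1"] that by (auto simp: dir_val_def)
    qed
  qed
qed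

lemma walk_to_path:
  "W \<noteq> [] \<Longrightarrow> \<exists>Q. Q \<noteq> [] \<and> hd Q = hd W \<and> last Q = last W \<and> distinct Q \<and> set Q \<subseteq> set W
     \<and> length Q \<le> length W
     \<and> (\<forall>k. Suc k < length Q \<longrightarrow> (\<exists>k'. Suc k' < length W \<and> Q!k = W!k' \<and> Q!Suc k = W!Suc k'))"
proof (induction W)
  case Nil then show ?case by simp
next
  case (Cons a W')
  show ?case
  proof (cases "W' = []")
    case True then show ?thesis by (rule_tac x="[a]" in exI) simp
  next
    case False
    from Cons.IH[OF False] obtain Q' where Q': "Q' \<noteq> []" "hd Q' = hd W'" "last Q' = last W'"
      "distinct Q'" "set Q' \<subseteq> set W'" "length Q' \<le> length W'"
      "\<forall>k. Suc k < length Q' \<longrightarrow> (\<exists>k'. Suc k' < length W' \<and> Q'!k = W'!k' \<and> Q'!Suc k = W'!Suc k')"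
      by blast
    show ?thesis
    proof (cases "a \<in> set Q'")
      case True
      then obtain us ws where sp: "Q' = us @ a # ws" by (meson split_list)
      show ?thesis
      proof (rule exI[of _ "a # ws"], intro conjI)
        show "last (a # ws) = last (a # W')" using Q'(3) sp False by simp
        show "distinct (a # ws)" using Q'(4) sp by simp
        show "set (a # ws) \<subseteq> set (a # W')" using Q'(5) sp by auto
        show "length (a # ws) \<le> length (a # W')" using Q'(6) sp by simp
        show "\<forall>k. Suc k < length (a # ws) \<longrightarrow> (\<exists>k'. Suc k' < length (a # W') \<and> (a # ws)!k = (a # W')!k' \<and> (a # ws)!Suc k = (a # W')!Suc k')"
        proof (intro allI impI)
          fix k assume k: "Suc k < length (a # ws)"
          have e1: "(a # ws)!k = Q'!(length us + k)" and e2: "(a # ws)!Suc k = Q'!Suc (length us + k)"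
            using sp by (simp_all add: nth_append)
          have "Suc (length us + k) < length Q'" using sp k by simp
          then obtain k' where "Suc k' < length W'" "Q'!(length us + k) = W'!k'" "Q'!Suc (length us + k) = W'!Suc k'"
            using Q'(7) by blast
          then show "\<exists>k'. Suc k' < length (a # W') \<and> (a # ws)!k = (a # W')!k' \<and> (a # ws)!Suc k = (a # W')!Suc k'"
            using e1 e2 by (rule_tac x="Suc k'" in exI) simp
        qed
      qed simp_all
    next
      case nf: False
      show ?thesis
      proof (rule exI[of _ "a # Q'"], intro conjI)
        show "last (a # Q') = last (a # W')" using Q'(1,3) False by simp
        show "\<forall>k. Suc k < length (a # Q') \<longrightarrow> (\<exists>k'. Suc k' < length (a # W') \<and> (a # Q')!k = (a # W')!k' \<and> (a # Q')!Suc k = (a # W')!Suc k')"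
        proof (intro allI impI)
          fix k assume k: "Suc k < length (a # Q')"
          show "\<exists>k'. Suc k' < length (a # W') \<and> (a # Q')!k = (a # W')!k' \<and> (a # Q')!Suc k = (a # W')!Suc k'"
          proof (cases k)
            case 0
            have "Q'!0 = W'!0" using Q'(1,2) False by (simp add: hd_conv_nth)
            then show ?thesis using 0 False by (rule_tac x=0 in exI) simp
          next
            case (Suc k1)
            then have "Suc k1 < length Q'" using k by simp
            then obtain k' where "Suc k' < length W'" "Q'!k1 = W'!k'" "Q'!Suc k1 = W'!Suc k'"
              using Q'(7) by blast
            then show ?thesis using Suc by (rule_tac x="Suc k'" in exI) simp
          qed
        qed
      qed (use Q' nf in auto)
    qed
  qed
qed


lemma sign_const:
  fixes f :: "nat \<Rightarrow> int"
  assumes "\<forall>k. lo \<le> k \<and> k < hi \<longrightarrow> \<bar>f (Suc k) - f k\<bar> \<le> 1"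
    and "\<forall>k. lo \<le> k \<and> k \<le> hi \<longrightarrow> f k \<noteq> 0"
  shows "lo \<le> k \<Longrightarrow> k \<le> hi \<Longrightarrow> (f k > 0 \<longleftrightarrow> f lo > 0)"
proof (induction k)
  case 0 then show ?case by simp
next
  case (Suc k)
  show ?case
  proof (cases "lo = Suc k")
    case True then show ?thesis by simp
  next
    case False
    then have "lo \<le> k" using Suc.prems by simp
    then have ih: "f k > 0 \<longleftrightarrow> f lo > 0" using Suc by simp
    have "\<bar>f (Suc k) - f k\<bar> \<le> 1" "f k \<noteq> 0" "f (Suc k) \<noteq> 0"
      using assms \<open>lo \<le> k\<close> Suc.prems by auto
    then show ?thesis using ih by auto
  qed
qed

lemma steps_sub_wall:
  assumes "\<And>d i. has_step n m Q d i \<Longrightarrow> has_step n m P d i" "is_wall n m P p"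
  shows "is_wall n m Q p"
  using assms unfolding is_wall_def inner_walls_def by blast

theorem lemma5p11:
  fixes n m :: nat and v :: "int list" and P :: "int list list" and I :: "int set"
  assumes "n > 1" and "m \<ge> 1"
    and "is_vertex n m v"
    and "pivot_path n m v P"
    and "P_interval n m P I"
  shows "\<forall>i j d1 d2. i \<in> I \<and> i + 1 \<in> I \<and> j \<in> I \<and> j + 1 \<in> I
           \<and> has_step n m P d1 (nat i) \<and> has_step n m P d2 (nat j) \<longrightarrow> d1 = d2"
proof -
  obtain p where pp: "p_pivot_path n m p v P" using assms(4) by (auto simp: pivot_path_def)
  have path: "is_path n m P v" and wall: "is_wall n m P p"
    and minl: "\<And>Q. is_path n m Q v \<Longrightarrow> is_wall n m Q p \<Longrightarrow> path_len P \<le> path_len Q"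
    using pp by (auto simp: p_pivot_path_def)
  have Pne: "P \<noteq> []" and hdP: "hd P = v" and lastP: "last P = zero_vertex m"
    and adjP: "\<forall>k. Suc k < length P \<longrightarrow> adjacent n m (P!k) (P!Suc k)"
    using path by (auto simp: is_path_def)
  obtain Lc Rc where LR: "drel n m v (\<lambda>i. int (Lc i) - int (Rc i))"
      "(\<Sum>i\<le>m. Lc i + Rc i) = length P - 1"
      "\<forall>i. Lc i > 0 \<longleftrightarrow> has_step n m P Left i" "\<forall>i. Rc i > 0 \<longleftrightarrow> has_step n m P Right i"
    using walk_counts[OF assms(1,2) Pne lastP adjP] hdP by auto
  define D where "D = (\<lambda>i. int (Lc i) - int (Rc i))"
  have hs_le: "i \<le> m" if "has_step n m P d i" for d i
    using that by (auto simp: has_step_def shift_def)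
  have nb: "\<not> (has_step n m P Left i \<and> has_step n m P Right i)" for i
  proof
    assume both: "has_step n m P Left i \<and> has_step n m P Right i"
    then have i0: "i \<le> m" "Lc i > 0" "Rc i > 0" using LR hs_le by auto
    have lt: "(\<Sum>k\<le>m. \<bar>D k\<bar>) < (\<Sum>k\<le>m. int (Lc k + Rc k))"
    proof (rule sum_strict_mono_ex1)
      show "finite {..m}" by simp
      show "\<forall>k\<in>{..m}. \<bar>D k\<bar> \<le> int (Lc k + Rc k)" by (auto simp: D_def)
      show "\<exists>k\<in>{..m}. \<bar>D k\<bar> < int (Lc k + Rc k)" using i0 by (rule_tac x=i in bexI) (auto simp: D_def)
    qed
    define N where "N = nat (\<Sum>k\<le>m. \<bar>D k\<bar>)"
    have sN: "(\<Sum>k\<le>m. \<bar>D k\<bar>) = int N" unfolding N_def by (simp add: sum_nonneg)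
    have "(\<Sum>k\<le>m. int (Lc k + Rc k)) = int (\<Sum>k\<le>m. Lc k + Rc k)" by (simp only: of_nat_sum)
    then have NP: "N < length P - 1" using lt sN LR(2) by linarith
    obtain W where W: "W \<noteq> []" "hd W = v" "last W = zero_vertex m" "length W = Suc N"
      "\<forall>y\<in>set W. is_vertex n m y"
      "\<forall>k. Suc k < length W \<longrightarrow> (\<exists>d i. shift n m d i (W!k) (W!Suc k)
             \<and> (d = Left \<longrightarrow> D i > 0) \<and> (d = Right \<longrightarrow> D i < 0))"
      using realize[OF assms(1) assms(3) LR(1)[folded D_def] sN] by blast
    obtain Q where Q: "Q \<noteq> []" "hd Q = hd W" "last Q = last W" "distinct Q" "set Q \<subseteq> set W"
      "length Q \<le> length W"
      "\<forall>k. Suc k < length Q \<longrightarrow> (\<exists>k'. Suc k' < length W \<and> Q!k = W!k' \<and> Q!Suc k = W!Suc k')"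
      using walk_to_path[OF W(1)] by blast
    have stepQ: "\<exists>d i. shift n m d i (Q!k) (Q!Suc k) \<and> (d = Left \<longrightarrow> D i > 0) \<and> (d = Right \<longrightarrow> D i < 0)"
      if "Suc k < length Q" for k
      using Q(7) W(6) that by metis
    have "is_path n m Q v"
      unfolding is_path_def
    proof (intro conjI allI impI)
      show "Q \<noteq> []" "hd Q = v" "last Q = zero_vertex m" "distinct Q" using Q W by auto
      show "\<forall>x\<in>set Q. is_vertex n m x" using Q(5) W(5) by auto
      fix k assume k: "Suc k < length Q"
      then have "Q!k \<in> set Q" "Q!Suc k \<in> set Q" by simp_all
      then have "is_vertex n m (Q!k)" "is_vertex n m (Q!Suc k)" using Q(5) W(5) by auto
      then show "adjacent n m (Q!k) (Q!Suc k)" using stepQ[OF k] unfolding adjacent_def by blast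
    qed
    moreover have "is_wall n m Q p"
    proof (rule steps_sub_wall[OF _ wall])
      fix d i assume "has_step n m Q d i"
      then obtain k where k: "Suc k < length Q" "shift n m d i (Q!k) (Q!Suc k)"
        unfolding has_step_def by blast
      obtain d' i' where s': "shift n m d' i' (Q!k) (Q!Suc k)" "(d' = Left \<longrightarrow> D i' > 0)" "(d' = Right \<longrightarrow> D i' < 0)"
        using stepQ[OF k(1)] by blast
      have "d = d' \<and> i = i'" using shift_unique[OF assms(1,2) k(2) s'(1)] .
      then have "(d = Left \<longrightarrow> Lc i > 0) \<and> (d = Right \<longrightarrow> Rc i > 0)" using s' by (auto simp: D_def)
      then show "has_step n m P d i" using LR(3,4) by (cases d) auto
    qed
    ultimately have "path_len P \<le> path_len Q" by (rule minl)
    moreover have "path_len Q \<le> N" using Q(6) W(4) by (simp add: path_len_def)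
    ultimately show False using NP by (simp add: path_len_def)
  qed
  have sgnL: "D i > 0" if "has_step n m P Left i" for i
    using that nb[of i] LR(3,4) by (auto simp: D_def)
  have sgnR: "D i < 0" if "has_step n m P Right i" for i
    using that nb[of i] LR(3,4) by (auto simp: D_def)
  have sgn: "(d = Left \<longleftrightarrow> D i > 0) \<and> D i \<noteq> 0" if "has_step n m P d i" for d i
    using that sgnL sgnR by (cases d) force+
  show ?thesis
  proof (intro allI impI)
    fix i j d1 d2
    assume h: "i \<in> I \<and> i + 1 \<in> I \<and> j \<in> I \<and> j + 1 \<in> I \<and> has_step n m P d1 (nat i) \<and> has_step n m P d2 (nat j)"
    define Wl where "Wl = {-1, int m + 1} \<union> inner_walls n m P"
    obtain a b where ab: "a \<in> Wl" "b \<in> Wl" "a < b" "\<forall>c\<in>Wl. \<not> (a < c \<and> c < b)" "I = {a + 1..b}"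
      using assms(5) unfolding P_interval_def Wl_def Let_def by blast
    have Wb: "\<And>c. c \<in> Wl \<Longrightarrow> -1 \<le> c \<and> c \<le> int m + 1" unfolding Wl_def inner_walls_def by auto
    have ab1: "-1 \<le> a" "b \<le> int m + 1" using Wb ab(1,2) by auto
    have inner: "\<exists>d. has_step n m P d (nat k)" if "a < k" "k < b" for k
    proof (rule ccontr)
      assume "\<not> ?thesis"
      then have "k \<in> Wl" using that ab1 unfolding Wl_def inner_walls_def by auto
      then show False using ab(4) that by blast
    qed
    define lo where "lo = nat (a + 1)"
    define hi where "hi = nat (b - 1)"
    have c1: "\<forall>k. lo \<le> k \<and> k < hi \<longrightarrow> \<bar>D (Suc k) - D k\<bar> \<le> 1"
    proof (intro allI impI)
      fix k assume k: "lo \<le> k \<and> k < hi"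
      then have km: "1 \<le> Suc k" "Suc k \<le> m" using ab1 unfolding hi_def by auto
      then have "v ! Suc k = D k - D (Suc k)" using LR(1) unfolding drel_def D_def by auto
      moreover have "v ! Suc k \<in> {-1,0,1}" using assms(3) km unfolding is_vertex_def by auto
      ultimately show "\<bar>D (Suc k) - D k\<bar> \<le> 1" by auto
    qed
    have abg: "a + 2 \<le> b" using h ab(5) by auto
    have c2: "\<forall>k. lo \<le> k \<and> k \<le> hi \<longrightarrow> D k \<noteq> 0"
    proof (intro allI impI)
      fix k assume k: "lo \<le> k \<and> k \<le> hi"
      then have "a < int k" "int k < b" using ab1 ab(3) abg unfolding lo_def hi_def by auto
      then obtain d where "has_step n m P d (nat (int k))" using inner by blast
      then show "D k \<noteq> 0" using sgn by auto
    qed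
    have ri: "lo \<le> nat i" "nat i \<le> hi" "lo \<le> nat j" "nat j \<le> hi"
      using h ab(5) ab1 unfolding lo_def hi_def by auto
    have "D (nat i) > 0 \<longleftrightarrow> D (nat j) > 0"
      using sign_const[OF c1 c2, of "nat i"] sign_const[OF c1 c2, of "nat j"] ri by simp
    moreover have "d1 = Left \<longleftrightarrow> D (nat i) > 0" "d2 = Left \<longleftrightarrow> D (nat j) > 0" using sgn h by auto
    ultimately show "d1 = d2" by (cases d1; cases d2) auto
  qed
qed

end
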